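(* For every $\mathbb T\in\mathrm{Tab}_\lambda$ (identified with $1\otimes\mathbb T\in\mathcal M_\lambda$) and every $1\le i\le N$, $\mathbb T\,\Xi_i=s^{\mathrm{CT}_{\mathbb T}[i]}\,\mathbb T$.
   Context: $N\ge2$, $q,s$ indeterminates, $K=\mathbb C(q,s)$. Operators act on the right, composed left to right. $\mathcal H_N(s)$ is generated by $T_1,\dots,T_{N-1}$ with $(T_i+1)(T_i-s)=0$ and the braid relations. $\lambda$ is a partition of $N$ (French convention, rows numbered bottom to top); $\mathrm{Tab}_\lambda$ = reverse standard tableaux (bijective fillings by $1,\dots,N$ strictly decreasing left to right in rows and bottom to top in columns); $\mathrm{CT}_{\mathbb T}[i]$ = column minus row of the cell containing $i$; $\mathbb T^{(i,j)}$ exchanges $i,j$. $V_\lambda$ has basis $\mathrm{Tab}_\lambda$ with right action $\mathbb TT_i=s\mathbb T$ if $i,i+1$ share a row, $-\mathbb T$ if they share a column, and if $i$ is in a higher row than $i+1$, with $m=\mathrm{CT}_{\mathbb T}[i+1]-\mathrm{CT}_{\mathbb T}[i]>0$, $\mathbb TT_i=\frac{s-1}{1-s^m}\mathbb T+\frac{s(1-s^{m+1})(1-s^{m-1})}{(1-s^m)^2}\mathbb T^{(i,i+1)}$; the remaining case is determined by this formula for $\mathbb T^{(i,i+1)}$ and the quadratic relation. $\mathcal M_\lambda=K[x_1,\dots,x_N]\otimes V_\lambda$; with $p^{s_i}$ = $p$ with $x_i,x_{i+1}$ exchanged: $(p\otimes u)\mathbf T_i=(1-s)\frac{x_{i+1}(p-p^{s_i})}{x_i-x_{i+1}}\otimes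 u+p^{s_i}\otimes uT_i$, $(p\otimes u)\mathbf w=p(qx_N,x_1,\dots,x_{N-1})\otimes uT_1\cdots T_{N-1}$, $\mathbf T_i^{-1}=s^{-1}(\mathbf T_i+1-s)$. Cherednik operators: $\Xi_i=s^{i-N}\mathbf T_{i-1}^{-1}\cdots\mathbf T_1^{-1}\mathbf w\mathbf T_{N-1}\cdots\mathbf T_i$. *)

theory Defs
  imports Complex_Main "HOL-Library.Poly_Mapping" "HOL-Computational_Algebra.Polynomial"
    "HOL-Computational_Algebra.Fraction_Field"
begin

text \<open>K is the fraction field of C[q][s], i.e. C(q,s). The inner polynomial variable is q,
  the outer one is s.\<close>
type_synonym K = "complex poly poly fract"

definition qK :: K where "qK = Fract [:[:0, 1:]:] 1"
definition sK :: K where "sK = Fract [:0, 1:] 1"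

definition is_partition :: "nat \<Rightarrow> nat list \<Rightarrow> bool" where
  "is_partition N lam \<longleftrightarrow> sorted (rev lam) \<and> (\<forall>x\<in>set lam. 0 < x) \<and> sum_list lam = N"

text \<open>French convention, 0-indexed: cell (r,c) lies in row r (counted from the bottom,
  row 0 is the longest row) and column c.\<close>
definition diagram :: "nat list \<Rightarrow> (nat \<times> nat) set" where
  "diagram lam = {(r, c). r < length lam \<and> c < lam ! r}"

type_synonym tableau = "nat \<times> nat \<Rightarrow> nat"

definition Tab :: "nat list \<Rightarrow> tableau set" where
  "Tab lam = {T. (\<forall>x. x \<notin> diagram lam \<longrightarrow> T x = 0)
      \<and> bij_betw T (diagram lam) {1..sum_list lam}
      \<and> (\<forall>r c. (r, Suc c) \<in> diagram lam \<longrightarrow> T (r, c) > T (r, Suc c))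
      \<and> (\<forall>r c. (Suc r, c) \<in> diagram lam \<longrightarrow> T (r, c) > T (Suc r, c))}"

definition pos :: "tableau \<Rightarrow> nat \<Rightarrow> nat \<times> nat" where
  "pos T k = (THE x. T x = k)"

definition CT :: "tableau \<Rightarrow> nat \<Rightarrow> int" where
  "CT T k = int (snd (pos T k)) - int (fst (pos T k))"

definition tab_swap :: "tableau \<Rightarrow> nat \<Rightarrow> nat \<Rightarrow> tableau" where
  "tab_swap T i j = (\<lambda>x. if T x = i then j else if T x = j then i else T x)"

definition kscale :: "K \<Rightarrow> ('a \<Rightarrow>\<^sub>0 K) \<Rightarrow> ('a \<Rightarrow>\<^sub>0 K)" where
  "kscale c v = Poly_Mapping.map (\<lambda>x. c * x) v"

definition lin_ext :: "('a \<Rightarrow> ('b \<Rightarrow>\<^sub>0 K)) \<Rightarrow> ('a \<Rightarrow>\<^sub>0 K) \<Rightarrow> ('b \<Rightarrow>\<^sub>0 K)" where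
  "lin_ext f v = (\<Sum>a\<in>Poly_Mapping.keys v. kscale (Poly_Mapping.lookup v a) (f a))"

type_synonym vlam = "tableau \<Rightarrow>\<^sub>0 K"

definition hk_a :: "int \<Rightarrow> K" where
  "hk_a m = (sK - 1) / (1 - sK powi m)"

definition hk_b :: "int \<Rightarrow> K" where
  "hk_b m = sK * (1 - sK powi (m + 1)) * (1 - sK powi (m - 1)) / (1 - sK powi m)^2"

text \<open>In the last case (i in a lower row than i+1)
  the coefficients are exactly those forced by the formula for U = T^(i,i+1) and the quadratic
  relation: from U T_i = a U + b T and T_i^2 = (s-1) T_i + s one gets
  T T_i = (s - 1 - a) T + ((s - 1 - a) a + s)/b U.\<close>
definition hecke_tab :: "nat \<Rightarrow> tableau \<Rightarrow> vlam" where
  "hecke_tab i T =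
    (if fst (pos T i) = fst (pos T (Suc i)) then Poly_Mapping.single T sK
     else if snd (pos T i) = snd (pos T (Suc i)) then Poly_Mapping.single T (-1)
     else if fst (pos T i) > fst (pos T (Suc i)) then
       (let m = CT T (Suc i) - CT T i in
          Poly_Mapping.single T (hk_a m) + Poly_Mapping.single (tab_swap T i (Suc i)) (hk_b m))
     else
       (let U = tab_swap T i (Suc i); m = CT U (Suc i) - CT U i; a = hk_a m; b = hk_b m in
          Poly_Mapping.single T (sK - 1 - a) + Poly_Mapping.single U (((sK - 1 - a) * a + sK) / b)))"

definition hecke_V :: "nat \<Rightarrow> vlam \<Rightarrow> vlam" where
  "hecke_V i v = lin_ext (hecke_tab i) v"

type_synonym mono = "nat \<Rightarrow>\<^sub>0 nat"
type_synonym mpoly = "mono \<Rightarrow>\<^sub>0 K"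

definition var :: "nat \<Rightarrow> mpoly" where
  "var j = Poly_Mapping.single (Poly_Mapping.single j 1) 1"

definition mono_swap :: "nat \<Rightarrow> mono \<Rightarrow> mono" where
  "mono_swap i a = Abs_poly_mapping (\<lambda>k. Poly_Mapping.lookup a
      (if k = i then Suc i else if k = Suc i then i else k))"

definition poly_swap :: "nat \<Rightarrow> mpoly \<Rightarrow> mpoly" where
  "poly_swap i p = lin_ext (\<lambda>a. Poly_Mapping.single (mono_swap i a) 1) p"

text \<open>exponent vector of x^a(q x_N, x_1, ..., x_{N-1}) (without the factor q^{a_1})\<close>
definition mono_w :: "nat \<Rightarrow> mono \<Rightarrow> mono" where
  "mono_w N a = Abs_poly_mapping (\<lambda>k. if k = N then Poly_Mapping.lookup a 1
      else if 1 \<le> k \<and> k < N then Poly_Mapping.lookup a (Suc k) else Poly_Mapping.lookup a k)"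

text \<open>p(q x_N, x_1, ..., x_{N-1})\<close>
definition poly_w :: "nat \<Rightarrow> mpoly \<Rightarrow> mpoly" where
  "poly_w N p = lin_ext (\<lambda>a. Poly_Mapping.single (mono_w N a) (qK ^ Poly_Mapping.lookup a 1)) p"

definition divdiff :: "nat \<Rightarrow> mpoly \<Rightarrow> mpoly" where
  "divdiff i p = (THE r. r * (var i - var (Suc i)) = p - poly_swap i p)"

type_synonym mlam = "(mono \<times> tableau) \<Rightarrow>\<^sub>0 K"

definition tensor :: "mpoly \<Rightarrow> vlam \<Rightarrow> mlam" where
  "tensor p u = Abs_poly_mapping (\<lambda>(a, T). Poly_Mapping.lookup p a * Poly_Mapping.lookup u T)"

definition opT :: "nat \<Rightarrow> mlam \<Rightarrow> mlam" where
  "opT i = lin_ext (\<lambda>(a, T).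
      tensor (kscale (1 - sK) (var (Suc i) * divdiff i (Poly_Mapping.single a 1))) (Poly_Mapping.single T 1)
    + tensor (poly_swap i (Poly_Mapping.single a 1)) (hecke_tab i T))"

definition opTinv :: "nat \<Rightarrow> mlam \<Rightarrow> mlam" where
  "opTinv i v = kscale (inverse sK) (opT i v + kscale (1 - sK) v)"

text \<open>(p (x) u) w = p(q x_N, x_1, ..., x_{N-1}) (x) u T_1 ... T_{N-1}  (right action, T_1 first)\<close>
definition opw :: "nat \<Rightarrow> mlam \<Rightarrow> mlam" where
  "opw N = lin_ext (\<lambda>(a, T).
      tensor (poly_w N (Poly_Mapping.single a 1))
             (fold hecke_V [1..<N] (Poly_Mapping.single T 1)))"

text \<open>Xi_i = s^{i-N} T_{i-1}^{-1} ... T_1^{-1} w T_{N-1} ... T_i, operators acting on the right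
  and composed left to right (so T_{i-1}^{-1} is applied first).\<close>
definition Xi :: "nat \<Rightarrow> nat \<Rightarrow> mlam \<Rightarrow> mlam" where
  "Xi N i v = kscale (sK powi (int i - int N))
      (fold opT (rev [i..<N]) (opw N (fold opTinv (rev [1..<i]) v)))"

end

theory Submission
  imports Defs
begin


lemma sK_nz: "sK \<noteq> 0"
  by (simp add: sK_def Zero_fract_def eq_fract)

lemma sK_pow: "sK ^ n = Fract ([:0,1:]^n) 1"
  by (induction n) (simp_all add: sK_def One_fract_def)

lemma sK_pow_ne1: "n > 0 \<Longrightarrow> sK ^ n \<noteq> 1"
proof
  assume "n > 0" "sK ^ n = 1"
  hence "([:0,1:]::complex poly poly)^n = 1" by (simp add: sK_pow One_fract_def eq_fract)
  hence "degree (([:0,1:]::complex poly poly)^n) = 0" by simp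
  thus False using \<open>n>0\<close> by (simp add: degree_power_eq)
qed

lemma sK_powi_ne1: "m \<noteq> 0 \<Longrightarrow> sK powi m \<noteq> 1"
proof (cases "m \<ge> 0")
  case True
  assume "m \<noteq> 0" 
  then show ?thesis using True sK_pow_ne1[of "nat m"] by (simp add: power_int_def)
next
  case False
  then show ?thesis using sK_pow_ne1[of "nat (-m)"] sK_nz by (simp add: power_int_def power_inverse)
qed


lemma lookup_kscale [simp]: "Poly_Mapping.lookup (kscale c v) x = c * Poly_Mapping.lookup v x"
  by (simp add: kscale_def map.rep_eq when_def)

lemma kscale_add: "kscale c (u + v) = kscale c u + kscale c v"
  by (rule poly_mapping_eqI) (simp add: lookup_add algebra_simps)
lemma kscale_add2: "kscale (c + d) u = kscale c u + kscale d u"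
  by (rule poly_mapping_eqI) (simp add: lookup_add algebra_simps)
lemma kscale_kscale [simp]: "kscale c (kscale d u) = kscale (c * d) u"
  by (rule poly_mapping_eqI) (simp add: algebra_simps)
lemma kscale_one [simp]: "kscale 1 u = u"
  by (rule poly_mapping_eqI) simp
lemma kscale_zero [simp]: "kscale 0 u = 0" "kscale c 0 = 0"
  by (rule poly_mapping_eqI, simp)+
lemma kscale_single [simp]: "kscale c (Poly_Mapping.single a d) = Poly_Mapping.single a (c * d)"
  by (rule poly_mapping_eqI) (simp add: lookup_single when_def)
lemma kscale_sum: "kscale c (sum f A) = (\<Sum>a\<in>A. kscale c (f a))"
  by (induction A rule: infinite_finite_induct) (simp_all add: kscale_add)
lemma keys_kscale: "Poly_Mapping.keys (kscale c v) \<subseteq> Poly_Mapping.keys v"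
  by (auto simp: in_keys_iff)

lemma lin_ext_superset:
  assumes "finite S" "Poly_Mapping.keys v \<subseteq> S"
  shows "lin_ext f v = (\<Sum>a\<in>S. kscale (Poly_Mapping.lookup v a) (f a))"
  unfolding lin_ext_def
  by (rule sum.mono_neutral_left) (use assms in \<open>auto simp: in_keys_iff\<close>)

lemma lin_ext_add: "lin_ext f (u + v) = lin_ext f u + lin_ext f v"
proof -
  let ?S = "Poly_Mapping.keys u \<union> Poly_Mapping.keys v"
  have "lin_ext f (u + v) = (\<Sum>a\<in>?S. kscale (Poly_Mapping.lookup (u+v) a) (f a))"
    by (rule lin_ext_superset) (auto simp: keys_add)
  also have "\<dots> = (\<Sum>a\<in>?S. kscale (Poly_Mapping.lookup u a) (f a)) + (\<Sum>a\<in>?S. kscale (Poly_Mapping.lookup v a) (f a))"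
    by (simp add: lookup_add kscale_add2 sum.distrib)
  also have "\<dots> = lin_ext f u + lin_ext f v"
    using lin_ext_superset[of ?S u f] lin_ext_superset[of ?S v f] by simp
  finally show ?thesis .
qed

lemma lin_ext_kscale: "lin_ext f (kscale c u) = kscale c (lin_ext f u)"
proof -
  have "lin_ext f (kscale c u) = (\<Sum>a\<in>Poly_Mapping.keys u. kscale (Poly_Mapping.lookup (kscale c u) a) (f a))"
    by (rule lin_ext_superset) (auto simp: keys_kscale)
  thus ?thesis by (simp add: lin_ext_def kscale_sum)
qed

lemma lin_ext_zero [simp]: "lin_ext f 0 = 0"
  by (simp add: lin_ext_def)

lemma lin_ext_single [simp]: "lin_ext f (Poly_Mapping.single a c) = kscale c (f a)"
  by (cases "c = 0") (simp_all add: lin_ext_def)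

lemma lin_ext_sum: "lin_ext f (sum g A) = (\<Sum>a\<in>A. lin_ext f (g a))"
  by (induction A rule: infinite_finite_induct) (simp_all add: lin_ext_add)

lemma expand: "v = (\<Sum>a\<in>Poly_Mapping.keys v. kscale (Poly_Mapping.lookup v a) (Poly_Mapping.single a 1))"
  by (rule poly_mapping_eqI) (simp add: lookup_sum lookup_single when_def in_keys_iff)

definition islin :: "(('a \<Rightarrow>\<^sub>0 K) \<Rightarrow> ('b \<Rightarrow>\<^sub>0 K)) \<Rightarrow> bool" where
  "islin F \<longleftrightarrow> (\<forall>u v. F (u + v) = F u + F v) \<and> (\<forall>c u. F (kscale c u) = kscale c (F u))"

lemma islin_lin_ext: "islin (lin_ext f)"
  by (simp add: islin_def lin_ext_add lin_ext_kscale)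

lemma islin_comp: "islin F \<Longrightarrow> islin G \<Longrightarrow> islin (\<lambda>v. G (F v))"
  by (simp add: islin_def)

lemma islin_kscale: "islin F \<Longrightarrow> islin (\<lambda>v. kscale c (F v))"
  by (simp add: islin_def kscale_add mult.commute)

lemma islin_add: "islin F \<Longrightarrow> islin G \<Longrightarrow> islin (\<lambda>v. F v + G v)"
  by (simp add: islin_def kscale_add algebra_simps)

lemma islin_id: "islin (\<lambda>v. v)"
  by (simp add: islin_def)

lemma islin_fold: "(\<And>x. x \<in> set xs \<Longrightarrow> islin (F x)) \<Longrightarrow> islin (fold F xs)"
proof (induction xs)
  case Nil then show ?case by (simp add: islin_def)
next
  case (Cons x xs)
  have "fold F (x # xs) = (\<lambda>v. fold F xs (F x v))" by (simp add: fun_eq_iff)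
  then show ?case using Cons islin_comp by (metis list.set_intros)
qed

lemma islin_zero: "islin F \<Longrightarrow> F 0 = 0"
  unfolding islin_def by (metis kscale_zero(1))

lemma islin_sum: "islin F \<Longrightarrow> F (sum g A) = (\<Sum>a\<in>A. F (g a))"
  by (induction A rule: infinite_finite_induct) (simp_all add: islin_zero, simp add: islin_def)

lemma islin_expand: "islin F \<Longrightarrow> lin_ext (\<lambda>a. F (Poly_Mapping.single a 1)) v = F v"
proof -
  assume L: "islin F"
  have "F v = F (\<Sum>a\<in>Poly_Mapping.keys v. kscale (Poly_Mapping.lookup v a) (Poly_Mapping.single a 1))"
    by (subst expand) (rule refl)
  also have "\<dots> = (\<Sum>a\<in>Poly_Mapping.keys v. kscale (Poly_Mapping.lookup v a) (F (Poly_Mapping.single a 1)))"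
    using L unfolding islin_sum[OF L] by (simp add: islin_def del: kscale_single)
  finally show ?thesis by (simp add: lin_ext_def)
qed

lemma islin_agree:
  assumes "islin F" "islin G" "\<And>a. a \<in> Poly_Mapping.keys v \<Longrightarrow> F (Poly_Mapping.single a 1) = G (Poly_Mapping.single a 1)"
  shows "F v = G v"
proof -
  have "F v = lin_ext (\<lambda>a. F (Poly_Mapping.single a 1)) v" using islin_expand[OF assms(1)] by simp
  also have "\<dots> = lin_ext (\<lambda>a. G (Poly_Mapping.single a 1)) v"
    unfolding lin_ext_def using assms(3) by (intro sum.cong) auto
  also have "\<dots> = G v" using islin_expand[OF assms(2)] by simp
  finally show ?thesis .
qed

lemma keys_lin_ext: "Poly_Mapping.keys (lin_ext f v) \<subseteq> (\<Union>a\<in>Poly_Mapping.keys v. Poly_Mapping.keys (f a))"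
  unfolding lin_ext_def using keys_sum keys_kscale by fastforce

lemma lookup_tensor: "Poly_Mapping.lookup (tensor p u) = (\<lambda>(a, T). Poly_Mapping.lookup p a * Poly_Mapping.lookup u T)"
proof -
  have "{x. (\<lambda>(a, T). Poly_Mapping.lookup p a * Poly_Mapping.lookup u T) x \<noteq> 0} \<subseteq> Poly_Mapping.keys p \<times> Poly_Mapping.keys u"
    by (auto simp: in_keys_iff)
  hence "finite {x. (\<lambda>(a, T). Poly_Mapping.lookup p a * Poly_Mapping.lookup u T) x \<noteq> 0}"
    by (rule finite_subset) simp
  thus ?thesis by (simp add: tensor_def)
qed

lemma islin_tensor: "islin (tensor p)"
  unfolding islin_def
  by (auto intro!: poly_mapping_eqI simp: lookup_tensor lookup_add algebra_simps)

lemma single0_one: "Poly_Mapping.single 0 1 = (1::mpoly)"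
  by (rule poly_mapping_eqI) (simp add: lookup_one lookup_single when_def)

lemma keys_tensor1: "Poly_Mapping.keys (tensor (1::mpoly) u) = (\<lambda>T. (0, T)) ` Poly_Mapping.keys u"
  by (auto simp: in_keys_iff lookup_tensor lookup_one when_def split: if_splits)

lemma lin_ext_tensor1: "lin_ext g (tensor (1::mpoly) u) = lin_ext (\<lambda>T. g (0, T)) u"
  unfolding lin_ext_def keys_tensor1
  by (subst sum.reindex) (auto simp: inj_on_def lookup_tensor lookup_one)

definition iota :: "vlam \<Rightarrow> mlam" where "iota u = tensor 1 u"

lemma islin_iota: "islin iota"
  unfolding iota_def[abs_def] by (rule islin_tensor)

lemma iota_lin_ext: "lin_ext (\<lambda>T. iota (f T)) u = iota (lin_ext f u)"
  using islin_iota unfolding lin_ext_def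
  by (simp add: islin_sum) (simp add: islin_def)

lemma iota_kscale: "iota (kscale c u) = kscale c (iota u)"
  using islin_iota by (simp add: islin_def)
lemma iota_add: "iota (u + v) = iota u + iota v"
  using islin_iota by (simp add: islin_def)

lemma var_ne: "var i \<noteq> var (Suc i)"
proof
  assume "var i = var (Suc i)"
  hence "Poly_Mapping.lookup (var i) (Poly_Mapping.single i 1) = Poly_Mapping.lookup (var (Suc i)) (Poly_Mapping.single i 1)"
    by simp
  moreover have "Poly_Mapping.single i (1::nat) \<noteq> Poly_Mapping.single (Suc i) 1"
    by (metis lookup_single_eq lookup_single_not_eq n_not_Suc_n zero_neq_one)
  ultimately show False by (simp add: var_def lookup_single when_def)
qed

lemma mono_swap0: "mono_swap i 0 = 0"
  by (simp add: mono_swap_def)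

lemma mono_w0: "mono_w N 0 = 0"
proof -
  have "(\<lambda>k. if k = N then Poly_Mapping.lookup (0::mono) 1
      else if 1 \<le> k \<and> k < N then Poly_Mapping.lookup (0::mono) (Suc k) else Poly_Mapping.lookup (0::mono) k) = (\<lambda>k. 0)"
    by (rule ext) simp
  thus ?thesis unfolding mono_w_def by simp
qed

lemma tensor_zero_left [simp]: "tensor 0 u = 0"
  by (rule poly_mapping_eqI) (simp add: lookup_tensor)

lemma poly_swap1: "poly_swap i 1 = 1"
proof -
  have "poly_swap i 1 = Poly_Mapping.single (mono_swap i 0) 1"
    unfolding poly_swap_def single0_one[symmetric] lin_ext_single kscale_single by simp
  thus ?thesis by (simp only: single0_one mono_swap0)
qed

lemma poly_w1: "poly_w N 1 = 1"
proof -
  have "poly_w N 1 = Poly_Mapping.single (mono_w N 0) 1"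
    unfolding poly_w_def single0_one[symmetric] lin_ext_single kscale_single by simp
  thus ?thesis by (simp only: single0_one mono_w0)
qed

lemma divdiff1: "divdiff i 1 = 0"
  unfolding divdiff_def poly_swap1
proof (rule the_equality)
  fix r :: mpoly assume "r * (var i - var (Suc i)) = 1 - 1"
  thus "r = 0" using var_ne by simp
qed simp

lemma opT_iota: "opT i (iota u) = iota (hecke_V i u)"
  unfolding opT_def iota_def lin_ext_tensor1
  using iota_lin_ext[of "hecke_tab i" u, unfolded iota_def]
  by (simp only: single0_one poly_swap1 divdiff1 hecke_V_def mult_zero_right kscale_zero
      tensor_zero_left add_0 prod.case)

definition Hinv :: "nat \<Rightarrow> vlam \<Rightarrow> vlam" where
  "Hinv i v = kscale (inverse sK) (hecke_V i v + kscale (1 - sK) v)"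

lemma islin_H: "islin (hecke_V i)"
  unfolding hecke_V_def[abs_def] by (rule islin_lin_ext)

lemma islin_Hinv: "islin (Hinv i)"
  unfolding Hinv_def[abs_def]
  by (intro islin_kscale islin_add islin_H) (simp add: islin_def kscale_add mult.commute)

lemma opTinv_iota: "opTinv i (iota u) = iota (Hinv i u)"
  by (simp add: opTinv_def Hinv_def opT_iota iota_add iota_kscale)

lemma fold_opT_iota: "fold opT xs (iota u) = iota (fold hecke_V xs u)"
  by (induction xs arbitrary: u) (simp_all add: opT_iota)

lemma fold_opTinv_iota: "fold opTinv xs (iota u) = iota (fold Hinv xs u)"
  by (induction xs arbitrary: u) (simp_all add: opTinv_iota)

lemma islin_foldH: "islin (fold hecke_V xs)"
  by (rule islin_fold) (rule islin_H)

lemma islin_foldHinv: "islin (fold Hinv xs)"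
  by (rule islin_fold) (rule islin_Hinv)

lemma opw_iota: "opw N (iota u) = iota (fold hecke_V [1..<N] u)"
proof -
  have "opw N (iota u) = lin_ext (\<lambda>T. iota (fold hecke_V [1..<N] (Poly_Mapping.single T 1))) u"
    unfolding opw_def iota_def lin_ext_tensor1
    by (simp only: single0_one poly_w1 prod.case)
  also have "\<dots> = iota (fold hecke_V [1..<N] u)"
    by (simp only: iota_lin_ext islin_expand[OF islin_foldH])
  finally show ?thesis .
qed

definition JJ :: "nat \<Rightarrow> nat \<Rightarrow> vlam \<Rightarrow> vlam" where
  "JJ N i v = kscale (sK powi (int i - int N))
      (fold hecke_V (rev [i..<N]) (fold hecke_V [1..<N] (fold Hinv (rev [1..<i]) v)))"

lemma Xi_iota: "Xi N i (iota v) = iota (JJ N i v)"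
  by (simp add: Xi_def JJ_def fold_opTinv_iota opw_iota fold_opT_iota iota_kscale)

lemma islin_JJ: "islin (JJ N i)"
  unfolding JJ_def[abs_def]
  by (intro islin_kscale islin_comp[OF islin_foldHinv] islin_comp[OF islin_foldH] islin_foldH)



lemma pos_swap1: "pos (tab_swap T i (Suc i)) i = pos T (Suc i)"
  unfolding pos_def tab_swap_def by (rule arg_cong[where f=The]) (auto simp: fun_eq_iff)
lemma pos_swap2: "pos (tab_swap T i (Suc i)) (Suc i) = pos T i"
  unfolding pos_def tab_swap_def by (rule arg_cong[where f=The]) (auto simp: fun_eq_iff)
lemma CT_swap1: "CT (tab_swap T i (Suc i)) i = CT T (Suc i)"
  by (simp add: CT_def pos_swap1)
lemma CT_swap2: "CT (tab_swap T i (Suc i)) (Suc i) = CT T i"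
  by (simp add: CT_def pos_swap2)
lemma swap_swap: "tab_swap (tab_swap T i j) i j = T"
  by (auto simp: tab_swap_def fun_eq_iff)


lemma keys_pair: "Poly_Mapping.keys (Poly_Mapping.single a x + Poly_Mapping.single b y) \<subseteq> {a, b}"
  by (rule order_trans[OF keys_add]) auto

locale tab =
  fixes N :: nat and lam :: "nat list" and T :: tableau
  assumes part: "is_partition N lam" and TT: "T \<in> Tab lam"
begin

abbreviation "D \<equiv> diagram lam"

lemma sumN: "sum_list lam = N" using part by (simp add: is_partition_def)

lemma T_out: "x \<notin> D \<Longrightarrow> T x = 0" using TT unfolding Tab_def by blast
lemma T_bij: "bij_betw T D {1..N}" using TT sumN by (simp add: Tab_def)
lemma T_range: "x \<in> D \<Longrightarrow> 1 \<le> T x \<and> T x \<le> N"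
  using T_bij by (auto simp: bij_betw_def)
lemma T_inj: "x \<in> D \<Longrightarrow> y \<in> D \<Longrightarrow> T x = T y \<Longrightarrow> x = y"
  using T_bij by (auto simp: bij_betw_def inj_on_def)
lemma T_row: "(r, Suc c) \<in> D \<Longrightarrow> T (r, c) > T (r, Suc c)" using TT by (simp add: Tab_def)
lemma T_col: "(Suc r, c) \<in> D \<Longrightarrow> T (r, c) > T (Suc r, c)" using TT by (simp add: Tab_def)

lemma T_in_D: "T x \<noteq> 0 \<Longrightarrow> x \<in> D"
  by (rule ccontr) (simp add: T_out)

lemma pos_eq: assumes "T x = k" "1 \<le> k" shows "pos T k = x"
  unfolding pos_def
proof (rule the_equality)
  show "T x = k" by fact
  fix y assume "T y = k"
  thus "y = x" using T_inj T_in_D assms by (metis not_one_le_zero)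
qed

lemma pos_spec: "1 \<le> k \<Longrightarrow> k \<le> N \<Longrightarrow> pos T k \<in> D \<and> T (pos T k) = k"
proof -
  assume "1 \<le> k" "k \<le> N"
  hence "k \<in> T ` D" using T_bij by (simp add: bij_betw_def)
  then obtain x where "x \<in> D" "T x = k" by blast
  thus ?thesis using pos_eq[of x k] \<open>1 \<le> k\<close> by simp
qed

lemma diag_col: "(r, c) \<in> D \<Longrightarrow> r' \<le> r \<Longrightarrow> (r', c) \<in> D"
  using part sorted_rev_nth_mono[of lam r' r]
  by (auto simp: diagram_def is_partition_def)

lemma diag_row: "(r, c) \<in> D \<Longrightarrow> c' \<le> c \<Longrightarrow> (r, c') \<in> D"
  by (auto simp: diagram_def)

lemma row_strict: "(r, c) \<in> D \<Longrightarrow> c' < c \<Longrightarrow> T (r, c') > T (r, c)"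
proof (induction c)
  case 0 then show ?case by simp
next
  case (Suc c)
  have S: "T (r, c) > T (r, Suc c)" using Suc.prems(1) by (rule T_row)
  have Dc: "(r, c) \<in> D" using Suc.prems(1) by (rule diag_row) simp
  show ?case
  proof (cases "c' = c")
    case True thus ?thesis using S by simp
  next
    case False
    hence "c' < c" using Suc.prems(2) by simp
    hence "T (r, c') > T (r, c)" using Suc.IH Dc by blast
    thus ?thesis using S by linarith
  qed
qed

lemma col_strict: "(r, c) \<in> D \<Longrightarrow> r' < r \<Longrightarrow> T (r', c) > T (r, c)"
proof (induction r)
  case 0 then show ?case by simp
next
  case (Suc r)
  have S: "T (r, c) > T (Suc r, c)" using Suc.prems(1) by (rule T_col)
  have Dc: "(r, c) \<in> D" using Suc.prems(1) by (rule diag_col) simp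
  show ?case
  proof (cases "r' = r")
    case True thus ?thesis using S by simp
  next
    case False
    hence "r' < r" using Suc.prems(2) by simp
    hence "T (r', c) > T (r, c)" using Suc.IH Dc by blast
    thus ?thesis using S by linarith
  qed
qed

lemma mono2: "(r, c) \<in> D \<Longrightarrow> r' \<le> r \<Longrightarrow> c' \<le> c \<Longrightarrow> (r', c') \<noteq> (r, c) \<Longrightarrow> T (r', c') > T (r, c)"
proof -
  assume A: "(r, c) \<in> D" "r' \<le> r" "c' \<le> c" "(r', c') \<noteq> (r, c)"
  have D1: "(r', c) \<in> D" using A(1,2) by (rule diag_col)
  show ?thesis
  proof (cases "r' = r")
    case True
    hence "c' < c" using A by auto
    thus ?thesis using row_strict[OF A(1)] True by simp
  next
    case False
    hence "r' < r" using A by simp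
    hence X: "T (r', c) > T (r, c)" using col_strict[OF A(1)] by simp
    show ?thesis
    proof (cases "c' = c")
      case True thus ?thesis using X by simp
    next
      case False
      hence "c' < c" using A by simp
      hence "T (r', c') > T (r', c)" using row_strict[OF D1] by simp
      thus ?thesis using X by linarith
    qed
  qed
qed

lemma posN: "2 \<le> N \<Longrightarrow> pos T N = (0, 0)"
proof -
  assume N2: "2 \<le> N"
  define x where "x = pos T N"
  have x: "x \<in> D" "T x = N" using pos_spec[of N] N2 by (auto simp: x_def)
  have "(0, 0) \<in> D" using diag_col[of "fst x" "snd x" 0] diag_row[of 0 "snd x" 0] x by auto
  have "x = (0, 0)"
  proof (rule ccontr)
    assume "x \<noteq> (0, 0)"
    hence "T (0, 0) > T x" using mono2[of "fst x" "snd x" 0 0] x by simp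
    thus False using T_range[OF \<open>(0,0) \<in> D\<close>] x by simp
  qed
  thus ?thesis by (simp add: x_def)
qed

lemma CT_N: "2 \<le> N \<Longrightarrow> CT T N = 0"
  using posN by (simp add: CT_def)

context
  fixes i :: nat
  assumes i1: "1 \<le> i" and iN: "i < N"
begin

definition "pa = pos T (Suc i)"
definition "pb = pos T i"

lemma pa_eq: "pa = pos T (Suc i)" by (simp add: pa_def)
lemma pb_eq: "pb = pos T i" by (simp add: pb_def)

lemma pa: "pa \<in> D" "T pa = Suc i" using pos_spec[of "Suc i"] i1 iN by (auto simp: pa_def)
lemma pb: "pb \<in> D" "T pb = i" using pos_spec[of i] i1 iN by (auto simp: pb_def)

lemma same_row: "fst pb = fst pa \<Longrightarrow> snd pb = Suc (snd pa)"
proof -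
  assume R: "fst pb = fst pa"
  have "snd pa < snd pb"
  proof (rule ccontr)
    assume "\<not> snd pa < snd pb"
    hence "snd pb \<le> snd pa" by simp
    moreover have "pb \<noteq> pa" using pa pb by auto
    ultimately have "T pb > T pa" using mono2[of "fst pa" "snd pa" "fst pb" "snd pb"] pa R
      by (cases pa, cases pb) auto
    thus False using pa pb by simp
  qed
  moreover have "\<not> Suc (snd pa) < snd pb"
  proof
    assume L: "Suc (snd pa) < snd pb"
    let ?z = "(fst pa, Suc (snd pa))"
    have "?z \<in> D" using diag_row[of "fst pb" "snd pb" "Suc (snd pa)"] pb R L by (cases pb) auto
    have "T ?z > T pb" using row_strict[of "fst pb" "snd pb" "Suc (snd pa)"] pb R L by (cases pb) auto
    moreover have "T pa > T ?z" using row_strict[OF \<open>?z \<in> D\<close>, of "snd pa"] by (cases pa) auto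
    ultimately show False using pa pb by simp
  qed
  ultimately show ?thesis by simp
qed

lemma same_col: "snd pb = snd pa \<Longrightarrow> fst pb = Suc (fst pa)"
proof -
  assume R: "snd pb = snd pa"
  have "fst pa < fst pb"
  proof (rule ccontr)
    assume "\<not> fst pa < fst pb"
    hence "fst pb \<le> fst pa" by simp
    moreover have "pb \<noteq> pa" using pa pb by auto
    ultimately have "T pb > T pa" using mono2[of "fst pa" "snd pa" "fst pb" "snd pb"] pa R
      by (cases pa, cases pb) auto
    thus False using pa pb by simp
  qed
  moreover have "\<not> Suc (fst pa) < fst pb"
  proof
    assume L: "Suc (fst pa) < fst pb"
    let ?z = "(Suc (fst pa), snd pa)"
    have "?z \<in> D" using diag_col[of "fst pb" "snd pb" "Suc (fst pa)"] pb R L by (cases pb) auto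
    have "T ?z > T pb" using col_strict[of "fst pb" "snd pb" "Suc (fst pa)"] pb R L by (cases pb) auto
    moreover have "T pa > T ?z" using col_strict[OF \<open>?z \<in> D\<close>, of "fst pa"] by (cases pa) auto
    ultimately show False using pa pb by simp
  qed
  ultimately show ?thesis by simp
qed

lemma higher: "fst pa < fst pb \<Longrightarrow> snd pa \<noteq> snd pb \<Longrightarrow> snd pb < snd pa"
proof (rule ccontr)
  assume A: "fst pa < fst pb" "snd pa \<noteq> snd pb" "\<not> snd pb < snd pa"
  let ?z = "(fst pa, snd pb)"
  have "?z \<in> D" using diag_col[of "fst pb" "snd pb" "fst pa"] pb A by (cases pb) auto
  have "T ?z > T pb" using col_strict[of "fst pb" "snd pb" "fst pa"] pb A by (cases pb) auto
  moreover have "T pa > T ?z" using row_strict[OF \<open>?z \<in> D\<close>, of "snd pa"] A by (cases pa) auto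
  ultimately show False using pa pb by simp
qed

lemma lower: "fst pb < fst pa \<Longrightarrow> snd pa \<noteq> snd pb \<Longrightarrow> snd pa < snd pb"
proof (rule ccontr)
  assume A: "fst pb < fst pa" "snd pa \<noteq> snd pb" "\<not> snd pa < snd pb"
  let ?z = "(fst pb, snd pa)"
  have "?z \<in> D" using diag_col[of "fst pa" "snd pa" "fst pb"] pa A by (cases pa) auto
  have "T ?z > T pa" using col_strict[of "fst pa" "snd pa" "fst pb"] pa A by (cases pa) auto
  moreover have "T pb > T ?z" using row_strict[OF \<open>?z \<in> D\<close>, of "snd pb"] A by (cases pb) auto
  ultimately show False using pa pb by simp
qed

lemma CT_a: "CT T (Suc i) = int (snd pa) - int (fst pa)" by (simp add: CT_def pa_def)
lemma CT_b: "CT T i = int (snd pb) - int (fst pb)" by (simp add: CT_def pb_def)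

lemma CT_row: assumes "fst pb = fst pa" shows "CT T i = CT T (Suc i) + 1"
proof -
  have "snd pb = Suc (snd pa)" using assms by (rule same_row)
  thus ?thesis unfolding CT_a CT_b using assms by simp
qed

lemma CT_col: assumes "snd pb = snd pa" shows "CT T i = CT T (Suc i) - 1"
proof -
  have "fst pb = Suc (fst pa)" using assms by (rule same_col)
  thus ?thesis unfolding CT_a CT_b using assms by simp
qed

lemma CT_higher: assumes "fst pa < fst pb" "snd pa \<noteq> snd pb" shows "CT T (Suc i) - CT T i \<ge> 2"
proof -
  have "snd pb < snd pa" using higher assms by blast
  hence "int (snd pb) < int (snd pa)" "int (fst pa) < int (fst pb)" using assms by simp_all
  thus ?thesis unfolding CT_a CT_b by linarith
qed

lemma CT_lower: assumes "fst pb < fst pa" "snd pa \<noteq> snd pb" shows "CT T i - CT T (Suc i) \<ge> 2"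
proof -
  have "snd pa < snd pb" using lower assms by blast
  hence "int (snd pa) < int (snd pb)" "int (fst pb) < int (fst pa)" using assms by simp_all
  thus ?thesis unfolding CT_a CT_b by linarith
qed

abbreviation "U \<equiv> tab_swap T i (Suc i)"


definition "sig k = (if k = i then Suc i else if k = Suc i then i else k)"

lemma U_eq: "U = (\<lambda>x. sig (T x))"
  by (simp add: tab_swap_def sig_def fun_eq_iff)

lemma sig_mono: "y < x \<Longrightarrow> \<not> (x = Suc i \<and> y = i) \<Longrightarrow> sig y < sig x"
  by (auto simp: sig_def)

lemma sig_bij: "bij_betw sig {1..N} {1..N}"
proof (rule bij_betw_imageI)
  show "inj_on sig {1..N}" by (auto simp: inj_on_def sig_def split: if_splits)
  show "sig ` {1..N} = {1..N}"
  proof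
    show "sig ` {1..N} \<subseteq> {1..N}" using i1 iN by (auto simp: sig_def)
    show "{1..N} \<subseteq> sig ` {1..N}"
    proof
      fix y assume y: "y \<in> {1..N}"
      have "sig (sig y) = y" by (auto simp: sig_def)
      moreover have "sig y \<in> {1..N}" using y i1 iN by (auto simp: sig_def)
      ultimately show "y \<in> sig ` {1..N}" by (metis image_eqI)
    qed
  qed
qed

lemma U_Tab: assumes "fst pa \<noteq> fst pb" "snd pa \<noteq> snd pb" shows "U \<in> Tab lam"
  unfolding Tab_def
proof (intro CollectI conjI allI impI)
  fix x assume "x \<notin> D"
  thus "U x = 0" using T_out i1 by (simp add: U_eq sig_def)
next
  have "bij_betw (sig \<circ> T) D {1..N}" using T_bij sig_bij by (rule bij_betw_trans)
  thus "bij_betw U D {1..sum_list lam}" by (simp add: U_eq sumN o_def)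
next
  fix r c assume rc: "(r, Suc c) \<in> D"
  have lt: "T (r, Suc c) < T (r, c)" using rc by (rule T_row)
  have "\<not> (T (r, c) = Suc i \<and> T (r, Suc c) = i)"
  proof
    assume E: "T (r, c) = Suc i \<and> T (r, Suc c) = i"
    hence "pa = (r, c)" "pb = (r, Suc c)" using pos_eq[of "(r,c)" "Suc i"] pos_eq[of "(r,Suc c)" i] i1
      by (auto simp: pa_def pb_def)
    thus False using assms by simp
  qed
  thus "U (r, Suc c) < U (r, c)" using sig_mono[OF lt] by (simp add: U_eq)
next
  fix r c assume rc: "(Suc r, c) \<in> D"
  have lt: "T (Suc r, c) < T (r, c)" using rc by (rule T_col)
  have "\<not> (T (r, c) = Suc i \<and> T (Suc r, c) = i)"
  proof
    assume E: "T (r, c) = Suc i \<and> T (Suc r, c) = i"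
    hence "pa = (r, c)" "pb = (Suc r, c)" using pos_eq[of "(r,c)" "Suc i"] pos_eq[of "(Suc r,c)" i] i1
      by (auto simp: pa_def pb_def)
    thus False using assms by simp
  qed
  thus "U (Suc r, c) < U (r, c)" using sig_mono[OF lt] by (simp add: U_eq)
qed

lemma U_ne: "U \<noteq> T"
proof
  assume "U = T"
  hence "U pb = T pb" by simp
  thus False using pb by (simp add: tab_swap_def)
qed

abbreviation "mm \<equiv> CT T (Suc i) - CT T i"

lemma HT_row: "fst pb = fst pa \<Longrightarrow> hecke_tab i T = Poly_Mapping.single T sK"
  by (simp add: hecke_tab_def pa_def pb_def)

lemma HT_col: "fst pb \<noteq> fst pa \<Longrightarrow> snd pb = snd pa \<Longrightarrow> hecke_tab i T = Poly_Mapping.single T (-1)"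
  by (simp add: hecke_tab_def pa_def pb_def)

lemma HT_hi: "fst pa < fst pb \<Longrightarrow> snd pa \<noteq> snd pb \<Longrightarrow>
   hecke_tab i T = Poly_Mapping.single T (hk_a mm) + Poly_Mapping.single U (hk_b mm)"
  by (simp add: hecke_tab_def pa_def pb_def Let_def)

lemma HT_lo: "fst pb < fst pa \<Longrightarrow> snd pa \<noteq> snd pb \<Longrightarrow>
   hecke_tab i T = Poly_Mapping.single T (sK - 1 - hk_a (- mm))
     + Poly_Mapping.single U (((sK - 1 - hk_a (- mm)) * hk_a (- mm) + sK) / hk_b (- mm))"
  by (simp add: hecke_tab_def pa_def pb_def Let_def CT_swap1 CT_swap2)

lemma keys_HT: "Poly_Mapping.keys (hecke_tab i T) \<subseteq> Tab lam"
proof -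
  have "T \<in> Tab lam" by (rule TT)
  consider "fst pb = fst pa" | "fst pb \<noteq> fst pa" "snd pb = snd pa"
    | "fst pa < fst pb" "snd pa \<noteq> snd pb" | "fst pb < fst pa" "snd pa \<noteq> snd pb"
    by linarith
  thus ?thesis
  proof cases
    case 1 thus ?thesis using HT_row TT by simp
  next
    case 2 thus ?thesis using HT_col TT by simp
  next
    case 3 thus ?thesis using HT_hi[OF 3] TT U_Tab keys_pair[of T _ U] by fastforce
  next
    case 4 thus ?thesis using HT_lo[OF 4] TT U_Tab keys_pair[of T _ U] by fastforce
  qed
qed

lemma hi_pair:
  assumes "fst pa < fst pb" "snd pa \<noteq> snd pb"
  shows "U \<in> Tab lam" "U \<noteq> T" "mm \<ge> 2"
    "hecke_tab i T = Poly_Mapping.single T (hk_a mm) + Poly_Mapping.single U (hk_b mm)"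
    "hecke_tab i U = Poly_Mapping.single U (sK - 1 - hk_a mm)
        + Poly_Mapping.single T (((sK - 1 - hk_a mm) * hk_a mm + sK) / hk_b mm)"
    "CT U (Suc i) = CT T i"
proof -
  show UT: "U \<in> Tab lam" using U_Tab assms by simp
  show "U \<noteq> T" by (rule U_ne)
  show "mm \<ge> 2" using CT_higher assms by simp
  show "hecke_tab i T = Poly_Mapping.single T (hk_a mm) + Poly_Mapping.single U (hk_b mm)"
    using HT_hi assms by simp
  show "CT U (Suc i) = CT T i" by (rule CT_swap2)
  interpret UU: tab N lam U using part UT by unfold_locales
  have pa': "UU.pa i = pb" unfolding UU.pa_eq[OF i1 iN] pb_def by (rule pos_swap2)
  have pb': "UU.pb i = pa" unfolding UU.pb_eq[OF i1 iN] pa_def by (rule pos_swap1)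
  have "hecke_tab i U = Poly_Mapping.single U (sK - 1 - hk_a (- (CT U (Suc i) - CT U i)))
     + Poly_Mapping.single (tab_swap U i (Suc i)) (((sK - 1 - hk_a (- (CT U (Suc i) - CT U i))) * hk_a (- (CT U (Suc i) - CT U i)) + sK) / hk_b (- (CT U (Suc i) - CT U i)))"
    using UU.HT_lo[OF i1 iN] assms pa' pb' by simp
  thus "hecke_tab i U = Poly_Mapping.single U (sK - 1 - hk_a mm)
        + Poly_Mapping.single T (((sK - 1 - hk_a mm) * hk_a mm + sK) / hk_b mm)"
    by (simp add: CT_swap1 CT_swap2 swap_swap)
qed

end
end



lemma H_single: "hecke_V i (Poly_Mapping.single T c) = kscale c (hecke_tab i T)"
  by (simp add: hecke_V_def)

lemma H_kscale: "hecke_V i (kscale c v) = kscale c (hecke_V i v)"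
  using islin_H by (simp add: islin_def)
lemma H_add: "hecke_V i (u + v) = hecke_V i u + hecke_V i v"
  using islin_H by (simp add: islin_def)

lemma powi_Suc: "sK powi (int (Suc i) - int N) = sK * sK powi (int i - int N)"
proof -
  have e: "int (Suc i) - int N = (int i - int N) + 1" by simp
  show ?thesis unfolding e using sK_nz by (simp add: power_int_add mult.commute)
qed

lemma powi_Suc': "inverse sK * sK powi (1 + int i - int N) = sK powi (int i - int N)"
  using powi_Suc[of i N] sK_nz by simp

lemma JJ_rec:
  assumes "1 \<le> i" "i < N" "Hinv i (hecke_V i v) = v"
  shows "JJ N i v = kscale (inverse sK) (hecke_V i (JJ N (Suc i) (hecke_V i v)))"
proof -
  have r1: "rev [1..<Suc i] = i # rev [1..<i]" using assms by simp
  have r2: "rev [i..<N] = rev [Suc i..<N] @ [i]" using assms by (simp add: upt_conv_Cons)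
  show ?thesis
    unfolding JJ_def r1 r2
    using assms(3) sK_nz
    by (simp add: H_kscale powi_Suc')
qed

lemma hk_b_nz: "m \<ge> 2 \<Longrightarrow> hk_b m \<noteq> 0"
  using sK_nz sK_powi_ne1[of m] sK_powi_ne1[of "m+1"] sK_powi_ne1[of "m-1"]
  by (simp add: hk_b_def)

lemma hk_a_rel: "m \<ge> 2 \<Longrightarrow> hk_a m * (1 - sK powi m) = sK - 1"
  using sK_powi_ne1[of m] by (simp add: hk_a_def)

lemma lin_single: "islin F \<Longrightarrow> F (Poly_Mapping.single a x) = kscale x (F (Poly_Mapping.single a 1))"
proof -
  assume "islin F"
  hence "F (kscale x (Poly_Mapping.single a 1)) = kscale x (F (Poly_Mapping.single a 1))"
    by (simp add: islin_def del: kscale_single)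
  thus ?thesis by simp
qed

lemma lin_pair: "islin F \<Longrightarrow> F (Poly_Mapping.single a x + Poly_Mapping.single b y)
   = kscale x (F (Poly_Mapping.single a 1)) + kscale y (F (Poly_Mapping.single b 1))"
proof -
  assume L: "islin F"
  hence "F (Poly_Mapping.single a x + Poly_Mapping.single b y) = F (Poly_Mapping.single a x) + F (Poly_Mapping.single b y)"
    by (simp add: islin_def)
  also have "\<dots> = kscale x (F (Poly_Mapping.single a 1)) + kscale y (F (Poly_Mapping.single b 1))"
    using lin_single[OF L, of a x] lin_single[OF L, of b y] by (rule arg_cong2[where f="(+)"])
  finally show ?thesis .
qed

lemma quad:
  assumes P: "is_partition N lam" and TT: "T \<in> Tab lam" and i: "1 \<le> i" "i < N"
  shows "hecke_V i (hecke_V i (Poly_Mapping.single T 1))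
     = kscale (sK - 1) (hecke_V i (Poly_Mapping.single T 1)) + kscale sK (Poly_Mapping.single T 1)"
proof -
  interpret tab N lam T using P TT by unfold_locales
  consider "fst (pb i) = fst (pa i)" | "fst (pb i) \<noteq> fst (pa i)" "snd (pb i) = snd (pa i)"
    | "fst (pa i) < fst (pb i)" "snd (pa i) \<noteq> snd (pb i)" | "fst (pb i) < fst (pa i)" "snd (pa i) \<noteq> snd (pb i)"
    by linarith
  thus ?thesis
  proof cases
    case 1
    hence h: "hecke_tab i T = Poly_Mapping.single T sK" using HT_row[OF i] by simp
    show ?thesis by (rule poly_mapping_eqI) (simp add: H_single h lookup_add lookup_single when_def algebra_simps)
  next
    case 2
    hence h: "hecke_tab i T = Poly_Mapping.single T (-1)" using HT_col[OF i] by simp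
    show ?thesis by (rule poly_mapping_eqI) (simp add: H_single h lookup_add lookup_single when_def algebra_simps)
  next
    case 3
    let ?U = "tab_swap T i (Suc i)"
    let ?m = "CT T (Suc i) - CT T i"
    note hp = hi_pair[OF i 3]
    define a where "a = hk_a ?m"
    define b where "b = hk_b ?m"
    have bnz: "b \<noteq> 0" using hp(3) hk_b_nz by (simp add: b_def)
    have hT: "hecke_tab i T = Poly_Mapping.single T a + Poly_Mapping.single ?U b" using hp(4) by (simp add: a_def b_def)
    have hU: "hecke_tab i ?U = Poly_Mapping.single ?U (sK - 1 - a) + Poly_Mapping.single T (((sK - 1 - a) * a + sK) / b)"
      using hp(5) by (simp add: a_def b_def)
    have e1: "a * a + b * (((sK - 1 - a) * a + sK) / b) = (sK - 1) * a + sK" using bnz by (simp add: field_simps)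
    have e2: "a * b + b * (sK - 1 - a) = (sK - 1) * b" by (simp add: algebra_simps)
    show ?thesis
      apply (simp only: H_single kscale_one hT lin_pair[OF islin_H])
      apply (simp only: H_single kscale_one hT hU)
      apply (rule poly_mapping_eqI)
      using hp(2) e1 e2 by (auto simp: lookup_add lookup_single when_def)
  next
    case 4
    let ?U = "tab_swap T i (Suc i)"
    have UT: "?U \<in> Tab lam" using U_Tab[OF i] 4 by simp
    interpret UU: tab N lam ?U using P UT by unfold_locales
    have pa': "UU.pa i = pb i" unfolding UU.pa_eq[OF i] pb_eq[OF i] by (rule pos_swap2)
    have pb': "UU.pb i = pa i" unfolding UU.pb_eq[OF i] pa_eq[OF i] by (rule pos_swap1)
    note hp = UU.hi_pair[OF i, unfolded pa' pb' swap_swap]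
    let ?m = "CT ?U (Suc i) - CT ?U i"
    define a where "a = hk_a ?m"
    define b where "b = hk_b ?m"
    have bnz: "b \<noteq> 0" using hp(3) 4 hk_b_nz by (simp add: b_def)
    have hU: "hecke_tab i ?U = Poly_Mapping.single ?U a + Poly_Mapping.single T b" using hp(4) 4 by (simp add: a_def b_def)
    define d where "d = ((sK - 1 - a) * a + sK) / b"
    have hT: "hecke_tab i T = Poly_Mapping.single T (sK - 1 - a) + Poly_Mapping.single ?U d"
      using hp(5) 4 by (simp add: a_def b_def d_def)
    have e1: "(sK - 1 - a) * (sK - 1 - a) + d * b = (sK - 1) * (sK - 1 - a) + sK" using bnz by (simp add: d_def field_simps)
    have e2: "(sK - 1 - a) * d + d * a = (sK - 1) * d" by (simp add: algebra_simps)
    have ne: "?U \<noteq> T" using hp(2) 4 by auto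
    show ?thesis
      apply (simp only: H_single kscale_one hT lin_pair[OF islin_H])
      apply (simp only: H_single kscale_one hT hU)
      apply (rule poly_mapping_eqI)
      using ne e1 e2 by (auto simp: lookup_add lookup_single when_def)
  qed
qed

lemma keys_H:
  assumes P: "is_partition N lam" and i: "1 \<le> i" "i < N" and K: "Poly_Mapping.keys v \<subseteq> Tab lam"
  shows "Poly_Mapping.keys (hecke_V i v) \<subseteq> Tab lam"
proof -
  have "\<And>a. a \<in> Tab lam \<Longrightarrow> Poly_Mapping.keys (hecke_tab i a) \<subseteq> Tab lam"
  proof -
    fix a assume "a \<in> Tab lam"
    then interpret tab N lam a using P by unfold_locales
    show "Poly_Mapping.keys (hecke_tab i a) \<subseteq> Tab lam" by (rule keys_HT[OF i])
  qed
  thus ?thesis using keys_lin_ext[of "hecke_tab i" v] K unfolding hecke_V_def by blast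
qed

lemma keys_Hinv:
  assumes P: "is_partition N lam" and i: "1 \<le> i" "i < N" and K: "Poly_Mapping.keys v \<subseteq> Tab lam"
  shows "Poly_Mapping.keys (Hinv i v) \<subseteq> Tab lam"
proof -
  have "Poly_Mapping.keys (Hinv i v) \<subseteq> Poly_Mapping.keys (hecke_V i v + kscale (1 - sK) v)"
    unfolding Hinv_def by (rule keys_kscale)
  also have "\<dots> \<subseteq> Poly_Mapping.keys (hecke_V i v) \<union> Poly_Mapping.keys (kscale (1 - sK) v)"
    by (rule keys_add)
  also have "\<dots> \<subseteq> Tab lam" using keys_H[OF P i K] keys_kscale[of "1 - sK" v] K by blast
  finally show ?thesis .
qed

lemma inv_basis:
  assumes P: "is_partition N lam" and TT: "T \<in> Tab lam" and i: "1 \<le> i" "i < N"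
  shows "Hinv i (hecke_V i (Poly_Mapping.single T 1)) = Poly_Mapping.single T 1"
    "hecke_V i (Hinv i (Poly_Mapping.single T 1)) = Poly_Mapping.single T 1"
proof -
  note q = quad[OF P TT i]
  let ?h = "hecke_V i (Poly_Mapping.single T 1)"
  have e: "kscale (sK - 1) ?h + kscale sK (Poly_Mapping.single T 1) + kscale (1 - sK) ?h
      = kscale sK (Poly_Mapping.single T 1)"
    by (rule poly_mapping_eqI) (simp add: lookup_add algebra_simps)
  show "Hinv i (hecke_V i (Poly_Mapping.single T 1)) = Poly_Mapping.single T 1"
    unfolding Hinv_def q e using sK_nz by simp
  have "hecke_V i (Hinv i (Poly_Mapping.single T 1))
     = kscale (inverse sK) (hecke_V i ?h + kscale (1 - sK) ?h)"
    unfolding Hinv_def H_kscale H_add by (simp only: H_kscale[symmetric] kscale_single mult_1_right)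
  thus "hecke_V i (Hinv i (Poly_Mapping.single T 1)) = Poly_Mapping.single T 1"
    unfolding q e using sK_nz by simp
qed

lemma HinvH:
  assumes P: "is_partition N lam" and i: "1 \<le> i" "i < N" and K: "Poly_Mapping.keys v \<subseteq> Tab lam"
  shows "Hinv i (hecke_V i v) = v"
  using islin_comp[OF islin_H islin_Hinv] islin_id
  by (rule islin_agree) (use inv_basis[OF P _ i] K in auto)

lemma HHinv:
  assumes P: "is_partition N lam" and i: "1 \<le> i" "i < N" and K: "Poly_Mapping.keys v \<subseteq> Tab lam"
  shows "hecke_V i (Hinv i v) = v"
  using islin_comp[OF islin_Hinv islin_H] islin_id
  by (rule islin_agree) (use inv_basis[OF P _ i] K in auto)

lemma fold_cancel:
  assumes P: "is_partition N lam" and "k < N"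
  shows "Poly_Mapping.keys v \<subseteq> Tab lam \<Longrightarrow> fold hecke_V [1..<Suc k] (fold Hinv (rev [1..<Suc k]) v) = v"
  using assms(2)
proof (induction k arbitrary: v)
  case 0 then show ?case by simp
next
  case (Suc k)
  have K': "Poly_Mapping.keys (Hinv (Suc k) v) \<subseteq> Tab lam"
    using keys_Hinv[OF P _ Suc.prems(2) Suc.prems(1)] by simp
  have "fold hecke_V [1..<Suc (Suc k)] (fold Hinv (rev [1..<Suc (Suc k)]) v)
     = hecke_V (Suc k) (fold hecke_V [1..<Suc k] (fold Hinv (rev [1..<Suc k]) (Hinv (Suc k) v)))"
    by simp
  also have "\<dots> = hecke_V (Suc k) (Hinv (Suc k) v)"
    using Suc.IH[OF K'] Suc.prems(2) by simp
  also have "\<dots> = v" using HHinv[OF P _ Suc.prems(2) Suc.prems(1)] by simp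
  finally show ?case .
qed

lemma JJ_N:
  assumes P: "is_partition N lam" and N2: "2 \<le> N" and K: "Poly_Mapping.keys v \<subseteq> Tab lam"
  shows "JJ N N v = v"
proof -
  obtain k where k: "N = Suc k" using N2 by (cases N) auto
  have "fold hecke_V [1..<N] (fold Hinv (rev [1..<N]) v) = v"
    unfolding k by (rule fold_cancel[OF P _ K]) (use k in simp)
  thus ?thesis by (simp add: JJ_def)
qed

lemma powi_split: "sK powi x = sK powi y * sK powi (x - y)"
  using sK_nz by (simp add: power_int_add[symmetric])

lemma collect: "kscale c (kscale p (Poly_Mapping.single T x + Poly_Mapping.single U y)
     + kscale q (Poly_Mapping.single U z + Poly_Mapping.single T w))
   = Poly_Mapping.single T (c * (p * x + q * w)) + Poly_Mapping.single U (c * (p * y + q * z))"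
  by (rule poly_mapping_eqI) (simp add: lookup_add lookup_single when_def algebra_simps)

lemma step:
  assumes P: "is_partition N lam" and i: "1 \<le> i" "i < N"
    and IH: "\<And>T. T \<in> Tab lam \<Longrightarrow> JJ N (Suc i) (Poly_Mapping.single T 1) = kscale (sK powi CT T (Suc i)) (Poly_Mapping.single T 1)"
    and TT: "T \<in> Tab lam"
  shows "JJ N i (Poly_Mapping.single T 1) = kscale (sK powi CT T i) (Poly_Mapping.single T 1)"
proof -
  interpret tab N lam T using P TT by unfold_locales
  have K: "Poly_Mapping.keys (Poly_Mapping.single T (1::K)) \<subseteq> Tab lam" using TT by simp
  have rec: "JJ N i (Poly_Mapping.single T 1) = kscale (inverse sK) (hecke_V i (JJ N (Suc i) (hecke_V i (Poly_Mapping.single T 1))))"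
    by (rule JJ_rec[OF i HinvH[OF P i K]])
  have sz: "sK \<noteq> 0" by (rule sK_nz)
  have iv: "inverse sK * (sK * q * sK) = q * sK"
     "inverse sK * (sK * q) = q" "inverse sK * (q * sK) = q" for q
    using sz by (simp_all add: field_simps)
  consider "fst (pb i) = fst (pa i)" | "fst (pb i) \<noteq> fst (pa i)" "snd (pb i) = snd (pa i)"
    | "fst (pa i) < fst (pb i)" "snd (pa i) \<noteq> snd (pb i)" | "fst (pb i) < fst (pa i)" "snd (pa i) \<noteq> snd (pb i)"
    by linarith
  thus ?thesis
  proof cases
    case 1
    hence h: "hecke_tab i T = Poly_Mapping.single T sK" using HT_row[OF i] by simp
    have c: "sK powi CT T i = sK powi CT T (Suc i) * sK"
      using powi_split[of "CT T i" "CT T (Suc i)"] CT_row[OF i 1] by simp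
    show ?thesis unfolding rec
      by (simp add: H_single h lin_single[OF islin_JJ, where a=T and x=sK] IH[OF TT] H_kscale c sz iv; simp add: mult.commute)
  next
    case 2
    hence h: "hecke_tab i T = Poly_Mapping.single T (-1)" using HT_col[OF i] by simp
    have c: "sK powi CT T (Suc i) = sK powi CT T i * sK"
      using powi_split[of "CT T (Suc i)" "CT T i"] CT_col[OF i 2(2)] by simp
    show ?thesis unfolding rec
      by (simp add: H_single h lin_single[OF islin_JJ, where a=T and x="-1"] IH[OF TT] H_kscale c sz iv; simp add: mult.commute)
  next
    case 3
    let ?U = "tab_swap T i (Suc i)"
    let ?m = "CT T (Suc i) - CT T i"
    note hp = hi_pair[OF i 3]
    define a where "a = hk_a ?m"
    define b where "b = hk_b ?m"
    define X where "X = sK powi ?m"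
    define sy where "sy = sK powi CT T i"
    have bnz: "b \<noteq> 0" using hp(3) hk_b_nz by (simp add: b_def)
    have z: "a * X + (sK - 1 - a) = 0" using hk_a_rel[OF hp(3)] by (simp add: a_def X_def algebra_simps)
    have sx: "sK powi CT T (Suc i) = sy * X" unfolding sy_def X_def by (rule powi_split)
    have hT: "hecke_tab i T = Poly_Mapping.single T a + Poly_Mapping.single ?U b" using hp(4) by (simp add: a_def b_def)
    have hU: "hecke_tab i ?U = Poly_Mapping.single ?U (sK - 1 - a) + Poly_Mapping.single T (((sK - 1 - a) * a + sK) / b)"
      using hp(5) by (simp add: a_def b_def)
    have JT: "JJ N (Suc i) (hecke_V i (Poly_Mapping.single T 1))
        = kscale (a * (sy * X)) (Poly_Mapping.single T 1) + kscale (b * sy) (Poly_Mapping.single ?U 1)"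
      by (simp add: H_single hT lin_pair[OF islin_JJ] IH[OF TT] IH[OF hp(1)] hp(6) sx sy_def)
    have eT: "inverse sK * (a * (sy * X) * a + b * sy * (((sK - 1 - a) * a + sK) / b)) = sy"
    proof -
      have "b * sy * (((sK - 1 - a) * a + sK) / b) = sy * ((sK - 1 - a) * a + sK)"
        using bnz by simp
      hence "a * (sy * X) * a + b * sy * (((sK - 1 - a) * a + sK) / b) = sy * (a * (a * X + (sK - 1 - a)) + sK)"
        by (simp add: algebra_simps)
      thus ?thesis using z sz by simp
    qed
    have eU: "a * (sy * X) * b + b * sy * (sK - 1 - a) = 0"
    proof -
      have "a * (sy * X) * b + b * sy * (sK - 1 - a) = b * sy * (a * X + (sK - 1 - a))" by (simp add: algebra_simps)
      thus ?thesis using z by simp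
    qed
    show ?thesis unfolding rec JT
      apply (simp only: H_add H_kscale H_single kscale_one hT hU collect eT eU)
      by (simp add: sy_def)
  next
    case 4
    let ?U = "tab_swap T i (Suc i)"
    have UT: "?U \<in> Tab lam" using U_Tab[OF i] 4 by simp
    interpret UU: tab N lam ?U using P UT by unfold_locales
    have pa': "UU.pa i = pb i" unfolding UU.pa_eq[OF i] pb_eq[OF i] by (rule pos_swap2)
    have pb': "UU.pb i = pa i" unfolding UU.pb_eq[OF i] pa_eq[OF i] by (rule pos_swap1)
    note hp = UU.hi_pair[OF i, unfolded pa' pb' swap_swap]
    let ?m = "CT ?U (Suc i) - CT ?U i"
    define a where "a = hk_a ?m"
    define b where "b = hk_b ?m"
    define X where "X = sK powi ?m"
    define sx where "sx = sK powi CT T (Suc i)"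
    have m2: "?m \<ge> 2" using hp(3) 4 by simp
    have bnz: "b \<noteq> 0" using m2 hk_b_nz by (simp add: b_def)
    have z: "a * X + (sK - 1 - a) = 0" using hk_a_rel[OF m2] by (simp add: a_def X_def algebra_simps)
    have sy: "sK powi CT T i = sx * X" unfolding sx_def X_def CT_swap1 CT_swap2 by (rule powi_split)
    have hU: "hecke_tab i ?U = Poly_Mapping.single ?U a + Poly_Mapping.single T b" using hp(4) 4 by (simp add: a_def b_def)
    define d where "d = ((sK - 1 - a) * a + sK) / b"
    have hT: "hecke_tab i T = Poly_Mapping.single T (sK - 1 - a) + Poly_Mapping.single ?U d"
      using hp(5) 4 by (simp add: a_def b_def d_def)
    have ne: "?U \<noteq> T" using hp(2) 4 by auto
    have JT: "JJ N (Suc i) (hecke_V i (Poly_Mapping.single T 1))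
        = kscale ((sK - 1 - a) * sx) (Poly_Mapping.single T 1) + kscale (d * (sx * X)) (Poly_Mapping.single ?U 1)"
      by (simp add: H_single hT lin_pair[OF islin_JJ] IH[OF TT] IH[OF UT] CT_swap2 sy sx_def)
    have al: "sK - 1 - a = - (a * X)" using z by (simp add: algebra_simps)
    have db: "d * b = (sK - 1 - a) * a + sK" using bnz by (simp add: d_def)
    have eT: "inverse sK * ((sK - 1 - a) * sx * (sK - 1 - a) + d * (sx * X) * b) = sx * X"
    proof -
      have "(sK - 1 - a) * sx * (sK - 1 - a) + d * (sx * X) * b = sx * ((sK - 1 - a) * (sK - 1 - a) + X * (d * b))"
        by (simp add: algebra_simps)
      also have "\<dots> = sx * (sK * X)" unfolding db al by (simp add: algebra_simps)
      finally show ?thesis using sz by simp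
    qed
    have eU: "(sK - 1 - a) * sx * d + d * (sx * X) * a = 0"
    proof -
      have "(sK - 1 - a) * sx * d + d * (sx * X) * a = d * sx * (a * X + (sK - 1 - a))" by (simp add: algebra_simps)
      thus ?thesis using z by simp
    qed
    show ?thesis unfolding rec JT sy
      apply (simp only: H_add H_kscale H_single kscale_one hT hU collect eT eU)
      by simp
  qed
qed

lemma JJ_all:
  assumes P: "is_partition N lam" and N2: "2 \<le> N"
  shows "k < N \<Longrightarrow> T \<in> Tab lam \<Longrightarrow> JJ N (N - k) (Poly_Mapping.single T 1) = kscale (sK powi CT T (N - k)) (Poly_Mapping.single T 1)"
proof (induction k arbitrary: T)
  case 0
  interpret tab N lam T using P 0 by unfold_locales
  show ?case using JJ_N[OF P N2, of "Poly_Mapping.single T 1"] 0 CT_N[OF N2] by simp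
next
  case (Suc k)
  have i: "1 \<le> N - Suc k" "N - Suc k < N" using Suc.prems by auto
  have e: "Suc (N - Suc k) = N - k" using Suc.prems by simp
  show ?case
    by (rule step[OF P i _ Suc.prems(2)]) (use Suc.IH Suc.prems e in auto)
qed

theorem proposition3p2:
  fixes N :: nat and lam :: "nat list" and T :: tableau and i :: nat
  assumes "2 \<le> N"
    and "is_partition N lam"
    and "T \<in> Tab lam"
    and "1 \<le> i" and "i \<le> N"
  shows "Xi N i (tensor 1 (Poly_Mapping.single T 1))
         = kscale (sK powi CT T i) (tensor 1 (Poly_Mapping.single T 1))"
proof -
  have e: "N - (N - i) = i" using assms by simp
  have "JJ N i (Poly_Mapping.single T 1) = kscale (sK powi CT T i) (Poly_Mapping.single T 1)"
    using JJ_all[OF assms(2,1), of "N - i" T] assms e by simp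
  hence "iota (JJ N i (Poly_Mapping.single T 1)) = kscale (sK powi CT T i) (iota (Poly_Mapping.single T 1))"
    by (simp only: iota_kscale)
  thus ?thesis using Xi_iota[of N i "Poly_Mapping.single T 1"] by (simp only: iota_def)
qed


end
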